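(* Let $k\geq 1$ and let $\zeta_1,\dots,\zeta_k\in(0,1)$ be real numbers such that $1,\zeta_1,\dots,\zeta_k$ are linearly independent over $\mathbb{Q}$. With the sequences $b_n^{(s)}$, $b_n^{\prime(s)}$ defined in the context, $$\omega\geq\max\left\{\sup_{s\geq 2}\limsup_{n\to\infty}\frac{b^{(s)}_{n+1}-b^{(s)}_n-1}{b^{(s)}_n},\ \sup_{s\ge2}\limsup_{n\to\infty}\frac{b^{\prime(s)}_{n+1}-b^{\prime(s)}_n-1}{b^{\prime(s)}_n}\right\}.$$
   Context: For $X>0$ let $\omega_1(X)$ be the supremum of all real $\nu$ such that $|x|\leq X$, $|\zeta_i x-y_i|\leq X^{-\nu}$ ($1\le i\le k$) has a nonzero solution $(x,y_1,\dots,y_k)\in\mathbb{Z}^{k+1}$; $\omega=\limsup_{X\to\infty}\omega_1(X)$. For an integer $s\ge2$, let $a_1^{i,(s)}<a_2^{i,(s)}<\cdots$ be the positions (after the point) of the nonzero digits in the base-$s$ expansion of $\zeta_i$, and $a_1^{\prime i,(s)}<a_2^{\prime i,(s)}<\cdots$ the positions of the nonzero digits in the base-$s$ expansion of $1-\zeta_i$. Let $(b_n^{(s)})_{n\ge1}$ be the increasing enumeration of $\{a_n^{i,(s)}:1\le i\le k, n\ge1\}$ and $(b_n^{\prime(s)})_{n\ge1}$ the increasing enumeration of $\{a_n^{\prime i,(s)}:1\le i\le k,n\ge1\}$. *)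

theory Defs
  imports "HOL-Analysis.Analysis" "HOL-Library.Liminf_Limsup" "HOL-Library.Infinite_Set"
begin

definition omega1 :: "nat \<Rightarrow> (nat \<Rightarrow> real) \<Rightarrow> real \<Rightarrow> ereal" where
  "omega1 k zeta X = Sup (ereal ` {nu :: real. \<exists>(x::int) (y::nat \<Rightarrow> int).
      (x \<noteq> 0 \<or> (\<exists>i\<in>{1..k}. y i \<noteq> 0)) \<and> \<bar>real_of_int x\<bar> \<le> X \<and>
      (\<forall>i\<in>{1..k}. \<bar>zeta i * real_of_int x - real_of_int (y i)\<bar> \<le> X powr (- nu))})"

definition omega :: "nat \<Rightarrow> (nat \<Rightarrow> real) \<Rightarrow> ereal" where
  "omega k zeta = Limsup at_top (\<lambda>X::real. omega1 k zeta X)"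

definition digit :: "nat \<Rightarrow> real \<Rightarrow> nat \<Rightarrow> int" where
  "digit s z j = \<lfloor>real s ^ j * z\<rfloor> mod int s"

definition nzpos :: "nat \<Rightarrow> real \<Rightarrow> nat set" where
  "nzpos s z = {j. j \<ge> 1 \<and> digit s z j \<noteq> 0}"

text \<open>Increasing enumeration of the union of positions; bseq k s f n is b_{n+1}
  (0-based indexing of the sequence b_1 < b_2 < ...).\<close>
definition bseq :: "nat \<Rightarrow> nat \<Rightarrow> (nat \<Rightarrow> real) \<Rightarrow> nat \<Rightarrow> nat" where
  "bseq k s f n = enumerate (\<Union>i\<in>{1..k}. nzpos s (f i)) n"

definition gapratio :: "nat \<Rightarrow> nat \<Rightarrow> (nat \<Rightarrow> real) \<Rightarrow> ereal" where
  "gapratio k s f = limsup (\<lambda>n. ereal ((real (bseq k s f (Suc n)) - real (bseq k s f n) - 1)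
                                   / real (bseq k s f n)))"

end

theory Submission
  imports Defs
begin

lemma fl_succ:
  assumes "s \<ge> 1"
  shows "\<lfloor>real s ^ Suc j * z\<rfloor> = int s * \<lfloor>real s ^ j * z\<rfloor> + digit s z (Suc j)"
proof -
  define A where "A = \<lfloor>real s ^ Suc j * z\<rfloor>"
  have "A div int s = \<lfloor>real s ^ Suc j * z / real_of_int (int s)\<rfloor>"
    unfolding A_def by (subst floor_divide_real_eq_div) auto
  also have "real s ^ Suc j * z / real_of_int (int s) = real s ^ j * z"
    using assms by (simp add: field_simps)
  finally have "A div int s = \<lfloor>real s ^ j * z\<rfloor>" .
  moreover have "A = int s * (A div int s) + A mod int s" by simp
  ultimately show ?thesis unfolding A_def digit_def by (metis)
qed

lemma zero_run:
  assumes "s \<ge> 1" "\<forall>j. m < j \<and> j \<le> m + g \<longrightarrow> digit s z j = 0"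
  shows "\<lfloor>real s ^ (m + g) * z\<rfloor> = int s ^ g * \<lfloor>real s ^ m * z\<rfloor>"
  using assms(2)
proof (induction g)
  case 0
  then show ?case by simp
next
  case (Suc g)
  have "\<lfloor>real s ^ (m + Suc g) * z\<rfloor> = int s * \<lfloor>real s ^ (m + g) * z\<rfloor> + digit s z (Suc (m+g))"
    using fl_succ[OF assms(1)] by simp
  also have "digit s z (Suc (m+g)) = 0" using Suc.prems by auto
  also have "\<lfloor>real s ^ (m + g) * z\<rfloor> = int s ^ g * \<lfloor>real s ^ m * z\<rfloor>"
    using Suc by auto
  finally show ?case by simp
qed

lemma frac_small:
  assumes "s \<ge> 1" "\<forall>j. m < j \<and> j \<le> m + g \<longrightarrow> digit s z j = 0"
  shows "0 \<le> real s ^ m * z - \<lfloor>real s ^ m * z\<rfloor>"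
    and "real s ^ g * (real s ^ m * z - \<lfloor>real s ^ m * z\<rfloor>) < 1"
proof -
  show "0 \<le> real s ^ m * z - \<lfloor>real s ^ m * z\<rfloor>" by linarith
  have e: "real_of_int \<lfloor>real s ^ (m + g) * z\<rfloor> = real s ^ g * \<lfloor>real s ^ m * z\<rfloor>"
    using zero_run[OF assms] by simp
  have "real s ^ (m + g) * z < real_of_int \<lfloor>real s ^ (m + g) * z\<rfloor> + 1" by linarith
  moreover have "real s ^ (m + g) * z = real s ^ g * (real s ^ m * z)" by (simp add: power_add mult_ac)
  ultimately have "real s ^ g * (real s ^ m * z) < real s ^ g * \<lfloor>real s ^ m * z\<rfloor> + 1"
    using e by linarith
  then show "real s ^ g * (real s ^ m * z - \<lfloor>real s ^ m * z\<rfloor>) < 1"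
    by (simp add: right_diff_distrib)
qed

lemma enum_between:
  fixes S :: "nat set"
  assumes "infinite S" "enumerate S n < j" "j < enumerate S (Suc n)"
  shows "j \<notin> S"
proof
  assume "j \<in> S"
  then have "(LEAST s. s \<in> S \<and> enumerate S n < s) \<le> j"
    using assms by (intro Least_le) auto
  with assms enumerate_Suc''[OF assms(1), of n] show False by simp
qed

lemma Limsup_filter_mono:
  assumes "F \<le> G"
  shows "Limsup F (f :: _ \<Rightarrow> ereal) \<le> Limsup G f"
  unfolding Limsup_def
  by (rule INF_superset_mono) (use assms in \<open>auto simp: le_filter_def\<close>)

lemma gap_le_omega:
  fixes f zeta :: "nat \<Rightarrow> real"
  assumes s2: "s \<ge> 2"
    and inf: "infinite (\<Union>i\<in>{1..k}. nzpos s (f i))"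
    and tr: "\<forall>i\<in>{1..k}. \<forall>(x::int) (y::int). \<exists>y'::int. \<bar>zeta i * x - y'\<bar> \<le> \<bar>f i * x - y\<bar>"
  shows "gapratio k s f \<le> omega k zeta"
proof -
  define S where "S = (\<Union>i\<in>{1..k}. nzpos s (f i))"
  define b where "b = enumerate S"
  have bb: "bseq k s f = b" unfolding b_def S_def bseq_def by auto
  have infS: "infinite S" using inf S_def by simp
  define X where "X n = real s ^ b n" for n
  have key: "ereal ((real (b (Suc n)) - real (b n) - 1) / real (b n)) \<le> omega1 k zeta (X n)" for n
  proof -
    define m where "m = b n"
    define g where "g = b (Suc n) - b n - 1"
    have lt: "b n < b (Suc n)" unfolding b_def using enumerate_step[OF infS] by simp
    have m1: "m \<ge> 1" using enumerate_in_set[OF infS, of n] unfolding m_def b_def S_def nzpos_def by auto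
    have gr: "real g = real (b (Suc n)) - real (b n) - 1" using lt unfolding g_def by auto
    have zr: "\<forall>i\<in>{1..k}. \<forall>j. m < j \<and> j \<le> m + g \<longrightarrow> digit s (f i) j = 0"
    proof (intro ballI allI impI)
      fix i j assume i: "i \<in> {1..k}" and j: "m < j \<and> j \<le> m + g"
      have "j < b (Suc n)" using j lt unfolding m_def g_def by linarith
      then have "j \<notin> S" using enum_between[OF infS, of n j] j unfolding m_def b_def by auto
      then show "digit s (f i) j = 0" using i j m1 unfolding S_def nzpos_def by auto
    qed
    define y0 where "y0 i = \<lfloor>real s ^ m * f i\<rfloor>" for i
    have sp: "real s ^ g > 0" using s2 by simp
    have bnd: "\<bar>f i * real_of_int (int s ^ m) - y0 i\<bar> \<le> inverse (real s ^ g)" if "i \<in> {1..k}" for i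
    proof -
      have a: "0 \<le> real s ^ m * f i - y0 i" "real s ^ g * (real s ^ m * f i - y0 i) < 1"
        using frac_small[of s m g "f i"] zr that s2 unfolding y0_def by auto
      then have "real s ^ m * f i - y0 i \<le> inverse (real s ^ g)"
        using sp by (simp add: field_simps)
      then show ?thesis using a by (simp add: mult_ac)
    qed
    have "\<forall>i. \<exists>y'::int. i \<in> {1..k} \<longrightarrow> \<bar>zeta i * real_of_int (int s ^ m) - y'\<bar> \<le> inverse (real s ^ g)"
    proof
      fix i show "\<exists>y'::int. i \<in> {1..k} \<longrightarrow> \<bar>zeta i * real_of_int (int s ^ m) - y'\<bar> \<le> inverse (real s ^ g)"
      proof (cases "i \<in> {1..k}")
        case True
        then obtain y' :: int where yy: "\<bar>zeta i * real_of_int (int s ^ m) - real_of_int y'\<bar> \<le> \<bar>f i * real_of_int (int s ^ m) - y0 i\<bar>"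
          using tr by blast
        show ?thesis using bnd[OF True] yy by (intro exI[of _ y'] impI) linarith
      qed auto
    qed
    then obtain y :: "nat \<Rightarrow> int" where y: "\<And>i. i \<in> {1..k} \<Longrightarrow> \<bar>zeta i * real_of_int (int s ^ m) - real_of_int (y i)\<bar> \<le> inverse (real s ^ g)"
      by metis
    define nu where "nu = real g / real m"
    have pw: "X n powr (- nu) = inverse (real s ^ g)"
    proof -
      have "X n = real s powr real m" unfolding X_def m_def using s2 by (simp add: powr_realpow)
      then have "X n powr (- nu) = real s powr (real m * - nu)" by (simp add: powr_powr)
      also have "real m * - nu = - real g" using m1 unfolding nu_def by simp
      also have "real s powr (- real g) = inverse (real s ^ g)"
        using s2 by (simp add: powr_minus powr_realpow)
      finally show ?thesis .
    qed
    have "nu \<in> {nu :: real. \<exists>(x::int) (y::nat \<Rightarrow> int).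
      (x \<noteq> 0 \<or> (\<exists>i\<in>{1..k}. y i \<noteq> 0)) \<and> \<bar>real_of_int x\<bar> \<le> X n \<and>
      (\<forall>i\<in>{1..k}. \<bar>zeta i * real_of_int x - real_of_int (y i)\<bar> \<le> X n powr (- nu))}"
      using s2 y pw by (intro CollectI exI[of _ "int s ^ m"] exI[of _ y]) (auto simp: X_def m_def)
    then have "ereal nu \<le> omega1 k zeta (X n)" unfolding omega1_def by (intro Sup_upper) auto
    then show ?thesis unfolding nu_def gr m_def .
  qed
  have Xlim: "filterlim X at_top sequentially"
  proof (rule filterlim_at_top_mono[OF filterlim_real_sequentially])
    show "\<forall>\<^sub>F n in sequentially. real n \<le> X n"
    proof (intro always_eventually allI)
      fix n
      have "n \<le> b n" unfolding b_def using le_enumerate[OF infS] by simp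
      moreover have "b n < 2 ^ b n" by (rule less_exp)
      moreover have "(2::real) ^ b n \<le> real s ^ b n" using s2 by (intro power_mono) auto
      ultimately have "real n < 2 ^ b n"
        by (metis of_nat_le_iff of_nat_less_iff le_less_trans of_nat_numeral of_nat_power)
      then show "real n \<le> X n" using \<open>(2::real) ^ b n \<le> real s ^ b n\<close> unfolding X_def by linarith
    qed
  qed
  have "gapratio k s f \<le> limsup (\<lambda>n. omega1 k zeta (X n))"
    unfolding gapratio_def bb by (intro Limsup_mono always_eventually allI key)
  also have "\<dots> \<le> Limsup (filtermap X sequentially) (omega1 k zeta)"
    by (rule Limsup_filtermap_ge)
  also have "\<dots> \<le> Limsup at_top (omega1 k zeta)"
    using Xlim unfolding filterlim_def by (intro Limsup_filter_mono) auto
  finally show ?thesis unfolding omega_def .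
qed

lemma infinite_nzpos:
  assumes "s \<ge> 2" "z \<notin> \<rat>"
  shows "infinite (nzpos s z)"
proof
  assume fin: "finite (nzpos s z)"
  obtain M where M: "\<forall>j\<in>nzpos s z. j \<le> M" using finite_nat_set_iff_bounded_le fin by blast
  have zr: "\<forall>j. M < j \<and> j \<le> M + g \<longrightarrow> digit s z j = 0" for g
  proof (intro allI impI)
    fix j
    assume h: "M < j \<and> j \<le> M + g"
    have "j \<ge> 1" using h by linarith
    then show "digit s z j = 0" using M h unfolding nzpos_def by (metis (mono_tags) mem_Collect_eq not_le)
  qed
  define fr where "fr = real s ^ M * z - \<lfloor>real s ^ M * z\<rfloor>"
  have f0: "0 \<le> fr" and f1: "\<And>g. real s ^ g * fr < 1"
    using frac_small[of s M _ z] zr assms(1) unfolding fr_def by auto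
  have "fr = 0"
  proof (rule ccontr)
    assume "fr \<noteq> 0"
    then have "fr > 0" using f0 by simp
    obtain g where "inverse fr < real s ^ g" using real_arch_pow[of "real s" "inverse fr"] assms(1) by auto
    then have "1 < real s ^ g * fr" using \<open>fr > 0\<close> by (simp add: field_simps)
    with f1[of g] show False by simp
  qed
  then have "z = real_of_int \<lfloor>real s ^ M * z\<rfloor> / real s ^ M"
    using assms(1) unfolding fr_def by (simp add: field_simps)
  then have "z \<in> \<rat>" by (metis Rats_divide Rats_of_int Rats_power Rats_of_nat)
  with assms(2) show False by simp
qed

theorem corollary2p2:
  fixes k :: nat and zeta :: "nat \<Rightarrow> real"
  assumes "k \<ge> 1"
    and "\<forall>i\<in>{1..k}. 0 < zeta i \<and> zeta i < 1"
    and "\<forall>(c0::rat) (c::nat \<Rightarrow> rat).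
           of_rat c0 + (\<Sum>i\<in>{1..k}. of_rat (c i) * zeta i) = (0::real)
           \<longrightarrow> c0 = 0 \<and> (\<forall>i\<in>{1..k}. c i = 0)"
  shows "omega k zeta \<ge> max (SUP s\<in>{2..}. gapratio k s zeta)
                             (SUP s\<in>{2..}. gapratio k s (\<lambda>i. 1 - zeta i))"
proof -
  have k1: "1 \<in> {1..k}" using assms(1) by simp
  have irr: "zeta 1 \<notin> \<rat>"
  proof
    assume "zeta 1 \<in> \<rat>"
    then obtain q where q: "zeta 1 = of_rat q" by (auto elim: Rats_cases)
    define c where "c = (\<lambda>i::nat. if i = 1 then (1::rat) else 0)"
    have "(\<Sum>i\<in>{1..k}. of_rat (c i) * zeta i) = (\<Sum>i\<in>{1..k}. if i = 1 then zeta i else 0)"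
      by (rule sum.cong) (auto simp: c_def)
    also have "\<dots> = zeta 1" using k1 by simp
    finally have "of_rat (- q) + (\<Sum>i\<in>{1..k}. of_rat (c i) * zeta i) = (0::real)"
      using q by (simp add: of_rat_minus)
    then have "c 1 = 0" using assms(3) k1 by blast
    then show False by (simp add: c_def)
  qed
  have irr2: "1 - zeta 1 \<notin> \<rat>"
  proof
    assume "1 - zeta 1 \<in> \<rat>"
    moreover have "zeta 1 = 1 - (1 - zeta 1)" by simp
    ultimately have "zeta 1 \<in> \<rat>" by (metis Rats_diff Rats_1)
    with irr show False by simp
  qed
  have A: "gapratio k s zeta \<le> omega k zeta" if "s \<in> {2..}" for s
  proof (rule gap_le_omega)
    show "s \<ge> 2" using that by simp
    have "infinite (nzpos s (zeta 1))" using infinite_nzpos[OF _ irr] that by simp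
    then show "infinite (\<Union>i\<in>{1..k}. nzpos s (zeta i))"
      using k1 by (meson UN_upper infinite_super)
    show "\<forall>i\<in>{1..k}. \<forall>(x::int) (y::int). \<exists>y'::int. \<bar>zeta i * x - y'\<bar> \<le> \<bar>zeta i * x - y\<bar>" by blast
  qed
  have B: "gapratio k s (\<lambda>i. 1 - zeta i) \<le> omega k zeta" if "s \<in> {2..}" for s
  proof (rule gap_le_omega)
    show "s \<ge> 2" using that by simp
    have "infinite (nzpos s (1 - zeta 1))" using infinite_nzpos[OF _ irr2] that by simp
    then show "infinite (\<Union>i\<in>{1..k}. nzpos s (1 - zeta i))"
      using k1 by (meson UN_upper infinite_super)
    show "\<forall>i\<in>{1..k}. \<forall>(x::int) (y::int). \<exists>y'::int. \<bar>zeta i * x - y'\<bar> \<le> \<bar>(1 - zeta i) * x - y\<bar>"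
    proof (intro ballI allI)
      fix i and x y :: int
      have "\<bar>zeta i * x - real_of_int (x - y)\<bar> = \<bar>(1 - zeta i) * x - y\<bar>"
        by (simp add: algebra_simps abs_minus_commute)
      then show "\<exists>y'::int. \<bar>zeta i * x - y'\<bar> \<le> \<bar>(1 - zeta i) * x - y\<bar>" by (intro exI[of _ "x - y"]) simp
    qed
  qed
  show ?thesis using A B by (auto intro!: SUP_least)
qed

end
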